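(* If $w\in S_n$ avoids the pattern $231$, then every permutation hop-equivalent to $w$ avoids $231$; that is, $P_w\subseteq S_n(231)$. Equivalently, if $w$ contains $231$ then $H_s(w)$ contains $231$ for every $s\in F(w)$.
   Context: A permutation $w\in S_n$ contains $231$ if there are indices $i<j<k$ with $w(k)<w(i)<w(j)$, and avoids $231$ otherwise; $S_n(231)$ is the set of $231$-avoiding permutations. For $w=w(1)\cdots w(n)$ set $w(0)=w(n+1)=\infty$. A letter $w(i)$, $1\le i\le n$, is free if $w(i-1)<w(i)<w(i+1)$ (upslope) or $w(i-1)>w(i)>w(i+1)$ (downslope); $F(w)$ is the set of free letters. For $j=w(i)\in F(w)$ define $H_j(w)$: if $j$ is on a downslope, take the smallest $k>i$ with $w(k)<j<w(k+1)$ and let $H_j(w)=w(1)\cdots w(i-1)w(i+1)\cdots w(k)\,j\,w(k+1)\cdots w(n)$; if $j$ is on an upslope, take the largest $k<i$ with $w(k-1)>j>w(k)$ and let $H_j(w)=w(1)\cdots w(k-1)\,j\,w(k)\cdots w(i-1)w(i+1)\cdots w(n)$. Hop-equivalence is the equivalence relation generated by $w\sim H_j(w)$; $P_w$ is the class of $w$. *)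

theory Defs
  imports Main "HOL-Library.Extended_Nat"
begin

text \<open>A permutation w in S_n is represented as the list [w(1),...,w(n)].
  Positions are 1-based in the paper; list indices are 0-based, so w(i) = w ! (i-1).\<close>

definition is_perm :: "nat \<Rightarrow> nat list \<Rightarrow> bool" where
  "is_perm n w \<longleftrightarrow> length w = n \<and> distinct w \<and> set w = {1..n}"

definition contains231 :: "nat list \<Rightarrow> bool" where
  "contains231 w \<longleftrightarrow> (\<exists>i j k. i < j \<and> j < k \<and> k < length w \<and>
       w ! k < w ! i \<and> w ! i < w ! j)"

definition avoids231 :: "nat list \<Rightarrow> bool" where
  "avoids231 w \<longleftrightarrow> \<not> contains231 w"

definition S231 :: "nat \<Rightarrow> nat list set" where
  "S231 n = {w. is_perm n w \<and> avoids231 w}"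

definition wx :: "nat list \<Rightarrow> nat \<Rightarrow> enat" where
  "wx w i = (if 1 \<le> i \<and> i \<le> length w then enat (w ! (i - 1)) else \<infinity>)"

definition upslope :: "nat list \<Rightarrow> nat \<Rightarrow> bool" where
  "upslope w i \<longleftrightarrow> 1 \<le> i \<and> i \<le> length w \<and> wx w (i - 1) < wx w i \<and> wx w i < wx w (i + 1)"

definition downslope :: "nat list \<Rightarrow> nat \<Rightarrow> bool" where
  "downslope w i \<longleftrightarrow> 1 \<le> i \<and> i \<le> length w \<and> wx w (i - 1) > wx w i \<and> wx w i > wx w (i + 1)"

definition free_letters :: "nat list \<Rightarrow> nat set" where
  "free_letters w = {w ! (i - 1) | i. upslope w i \<or> downslope w i}"

definition pos :: "nat list \<Rightarrow> nat \<Rightarrow> nat" where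
  "pos w j = (LEAST i. 1 \<le> i \<and> i \<le> length w \<and> w ! (i - 1) = j)"

definition hop :: "nat list \<Rightarrow> nat \<Rightarrow> nat list" where
  "hop w j = (let i = pos w j in
     if downslope w i then
       (let k = (LEAST k. i < k \<and> wx w k < enat j \<and> enat j < wx w (k + 1)) in
         take (i - 1) w @ take (k - i) (drop i w) @ [j] @ drop k w)
     else
       (let k = (GREATEST k. k < i \<and> wx w (k - 1) > enat j \<and> enat j > wx w k) in
         take (k - 1) w @ [j] @ take (i - k) (drop (k - 1) w) @ drop i w))"

definition hop_step :: "nat list \<Rightarrow> nat list \<Rightarrow> bool" where
  "hop_step w v \<longleftrightarrow> (\<exists>j \<in> free_letters w. v = hop w j)"

definition hop_equiv :: "nat list \<Rightarrow> nat list \<Rightarrow> bool" where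
  "hop_equiv = (\<lambda>x y. hop_step x y \<or> hop_step y x)\<^sup>*\<^sup>*"

definition hop_class :: "nat list \<Rightarrow> nat list set" where
  "hop_class w = {v. hop_equiv w v}"

end

theory Submission
  imports Defs "HOL-Library.Multiset"
begin


fun idx :: "nat list \<Rightarrow> nat \<Rightarrow> nat" where
  "idx [] x = 0" | "idx (y#ys) x = (if x = y then 0 else Suc (idx ys x))"

lemma idx_append: "idx (xs@ys) x = (if x \<in> set xs then idx xs x else length xs + idx ys x)"
  by (induction xs) auto

lemma idx_less: "x \<in> set xs \<Longrightarrow> idx xs x < length xs"
  by (induction xs) auto

lemma nth_idx: "x \<in> set xs \<Longrightarrow> xs ! idx xs x = x"
  by (induction xs) auto

lemma idx_nth: "distinct xs \<Longrightarrow> i < length xs \<Longrightarrow> idx xs (xs!i) = i"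
proof (induction xs arbitrary: i)
  case (Cons a xs) then show ?case by (cases i) (auto simp: nth_mem)
qed simp

definition c231 :: "nat list \<Rightarrow> bool" where
  "c231 w \<longleftrightarrow> (\<exists>x y z. x \<in> set w \<and> y \<in> set w \<and> z \<in> set w \<and> z < x \<and> x < y \<and>
      idx w x < idx w y \<and> idx w y < idx w z)"

lemma contains_c231: assumes "distinct w" shows "contains231 w \<longleftrightarrow> c231 w"
proof
  assume "contains231 w"
  then obtain i j k where h: "i < j" "j < k" "k < length w" "w ! k < w ! i" "w ! i < w ! j"
    unfolding contains231_def by blast
  show "c231 w" unfolding c231_def
    apply (rule exI[of _ "w!i"], rule exI[of _ "w!j"], rule exI[of _ "w!k"])
    using h assms by (simp add: idx_nth nth_mem)
next
  assume "c231 w"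
  then obtain x y z where h: "x \<in> set w" "y \<in> set w" "z \<in> set w" "z < x" "x < y"
      "idx w x < idx w y" "idx w y < idx w z" unfolding c231_def by blast
  show "contains231 w" unfolding contains231_def
    apply (rule exI[of _ "idx w x"], rule exI[of _ "idx w y"], rule exI[of _ "idx w z"])
    using h by (simp add: idx_less nth_idx)
qed

lemma idx_last: "distinct L \<Longrightarrow> x \<in> set L \<Longrightarrow> x \<noteq> last L \<Longrightarrow> idx L x < idx L (last L)"
proof -
  assume a: "distinct L" "x \<in> set L" "x \<noteq> last L"
  then have ne: "L \<noteq> []" by auto
  have "idx L (last L) = length L - 1" using idx_nth[OF a(1), of "length L - 1"] ne
    by (simp add: last_conv_nth)
  moreover have "idx L x < length L" using idx_less a by auto
  moreover have "idx L x \<noteq> length L - 1" using nth_idx[OF a(2)] a(3) ne by (metis last_conv_nth)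
  ultimately show ?thesis by linarith
qed

lemma idx_hd: "x \<in> set R \<Longrightarrow> x \<noteq> hd R \<Longrightarrow> 0 < idx R x"
  by (cases R) auto

lemma idx_hd0: "R \<noteq> [] \<Longrightarrow> idx R (hd R) = 0"
  by (cases R) auto

lemma key_dir:
  assumes d: "distinct (L@[j]@B@R)" and B: "\<forall>b\<in>set B. b<j" and L: "L\<noteq>[] \<longrightarrow> j < last L"
  shows "c231 (L@[j]@B@R) \<Longrightarrow> c231 (L@B@[j]@R)"
proof -
  assume "c231 (L@[j]@B@R)"
  then obtain x y z where h: "x \<in> set (L@[j]@B@R)" "y \<in> set (L@[j]@B@R)" "z \<in> set (L@[j]@B@R)" "z < x" "x < y"
      "idx (L@[j]@B@R) x < idx (L@[j]@B@R) y" "idx (L@[j]@B@R) y < idx (L@[j]@B@R) z" unfolding c231_def by blast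
  have dL: "distinct L" using d by auto
  show ?thesis
  proof (cases "y = j \<and> z \<in> set B")
    case True
    have jL: "j \<notin> set L" "j \<notin> set B" using d by auto
    have xL: "x \<in> set L" using h(6) True jL idx_less[of x L] 
      by (auto simp: idx_append split: if_splits)
    have ne: "L \<noteq> []" using xL by auto
    have xa: "x \<noteq> last L" using True h L ne by auto
    have zL: "z \<notin> set L" using d True by auto
    show ?thesis unfolding c231_def
      apply (rule exI[of _ x], rule exI[of _ "last L"], rule exI[of _ z])
      using True h L ne xL xa zL idx_last[OF dL xL xa] idx_less[of "last L" L]
      by (auto simp: idx_append)
  next
    case False
    have "idx (L@B@[j]@R) x < idx (L@B@[j]@R) y" "idx (L@B@[j]@R) y < idx (L@B@[j]@R) z"
      using False h d B idx_less[of x L] idx_less[of y L] idx_less[of z L]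
        idx_less[of x B] idx_less[of y B] idx_less[of z B]
      by (auto simp: idx_append split: if_splits)
    then show ?thesis unfolding c231_def using h by auto
  qed
qed

lemma key_dir2:
  assumes d: "distinct (L@[j]@B@R)" and B: "\<forall>b\<in>set B. b<j" and R: "R\<noteq>[] \<longrightarrow> j < hd R"
  shows "c231 (L@B@[j]@R) \<Longrightarrow> c231 (L@[j]@B@R)"
proof -
  assume "c231 (L@B@[j]@R)"
  then obtain x y z where h: "x \<in> set (L@B@[j]@R)" "y \<in> set (L@B@[j]@R)" "z \<in> set (L@B@[j]@R)" "z < x" "x < y"
      "idx (L@B@[j]@R) x < idx (L@B@[j]@R) y" "idx (L@B@[j]@R) y < idx (L@B@[j]@R) z" unfolding c231_def by blast
  show ?thesis
  proof (cases "y = j \<and> x \<in> set B")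
    case True
    have jL: "j \<notin> set L" "j \<notin> set B" "j \<notin> set R" using d by auto
    have zR: "z \<in> set R" using h(7) h(3) True jL d idx_less[of z L] idx_less[of z B]
      by (auto simp: idx_append split: if_splits)
    have ne: "R \<noteq> []" using zR by auto
    have zc: "z \<noteq> hd R" using True h R ne B by auto
    have cR: "hd R \<in> set R" using ne by simp
    have xR: "x \<notin> set R" "x \<notin> set L" using d True by auto
    have cLB: "hd R \<notin> set L" "hd R \<notin> set B" "hd R \<noteq> j" using d cR by auto
    show ?thesis unfolding c231_def
      apply (rule exI[of _ x], rule exI[of _ "hd R"], rule exI[of _ z])
      using True h R ne zR zc cR xR cLB idx_hd[OF zR zc] idx_hd0[OF ne] idx_less[of x B] d
      by (auto simp: idx_append)
  next
    case False
    have "idx (L@[j]@B@R) x < idx (L@[j]@B@R) y" "idx (L@[j]@B@R) y < idx (L@[j]@B@R) z"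
      using False h d B idx_less[of x L] idx_less[of y L] idx_less[of z L]
        idx_less[of x B] idx_less[of y B] idx_less[of z B]
      by (auto simp: idx_append split: if_splits)
    then show ?thesis unfolding c231_def using h by auto
  qed
qed

lemma key:
  assumes d: "distinct (L@[j]@B@R)" and B: "\<forall>b\<in>set B. b<j" and L: "L\<noteq>[] \<longrightarrow> j < last L"
    and R: "R\<noteq>[] \<longrightarrow> j < hd R"
  shows "contains231 (L@B@[j]@R) \<longleftrightarrow> contains231 (L@[j]@B@R)"
proof -
  have d2: "distinct (L@B@[j]@R)" using d by auto
  show ?thesis using contains_c231[OF d] contains_c231[OF d2] key_dir[OF d B L] key_dir2[OF d B R] by blast
qed



lemma least_run:
  fixes f :: "nat \<Rightarrow> enat" and c :: enat
  assumes a: "f (Suc i) < c" and inf: "\<forall>m>N. f m = \<infinity>" and c: "c \<noteq> \<infinity>" and ne: "\<forall>m>i. f m \<noteq> c"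
  defines "k \<equiv> LEAST k. i<k \<and> f k < c \<and> c < f (k+1)"
  shows "i<k \<and> f k < c \<and> c < f (k+1) \<and> (\<forall>m. i<m \<longrightarrow> m \<le> k \<longrightarrow> f m < c)"
proof -
  have run: "(\<forall>k'. i<k' \<and> k' < m \<longrightarrow> \<not> (f k' < c \<and> c < f (k'+1))) \<Longrightarrow> i<m \<Longrightarrow> f m < c" for m
  proof (induction m)
    case 0 then show ?case by simp
  next
    case (Suc m)
    show ?case
    proof (cases "m = i")
      case True then show ?thesis using a by simp
    next
      case False
      then have im: "i < m" using Suc.prems by simp
      have fm: "f m < c" using Suc.IH Suc.prems im by auto
      have "\<not> (f m < c \<and> c < f (m+1))" using Suc.prems im by auto
      then have "f (Suc m) \<le> c" using fm by (simp add: not_less)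
      moreover have "f (Suc m) \<noteq> c" using ne im by auto
      ultimately show ?thesis by simp
    qed
  qed
  have ex: "\<exists>k. i<k \<and> f k < c \<and> c < f (k+1)"
  proof (rule ccontr)
    assume "\<not> ?thesis"
    then have "f (Suc (max N i)) < c" using run[of "Suc (max N i)"] by auto
    moreover have "f (Suc (max N i)) = \<infinity>" using inf by auto
    ultimately show False by simp
  qed
  have P: "i<k \<and> f k < c \<and> c < f (k+1)" unfolding k_def by (rule LeastI_ex[OF ex])
  have "\<forall>m. i<m \<longrightarrow> m \<le> k \<longrightarrow> f m < c"
  proof (intro allI impI)
    fix m assume m: "i<m" "m \<le> k"
    show "f m < c"
    proof (rule run[OF _ m(1)], intro allI impI)
      fix k' assume "i < k' \<and> k' < m"
      then have "k' < k" using m by simp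
      then show "\<not> (f k' < c \<and> c < f (k'+1))" using not_less_Least[of k' "\<lambda>k. i<k \<and> f k < c \<and> c < f (k+1)"]
        \<open>i < k' \<and> k' < m\<close> unfolding k_def by blast
    qed
  qed
  then show ?thesis using P by blast
qed

lemma greatest_run:
  fixes f :: "nat \<Rightarrow> enat" and c :: enat
  assumes a: "f (i-1) < c" and i: "1 \<le> i" and f0: "f 0 = \<infinity>" and c: "c \<noteq> \<infinity>" and ne: "\<forall>m<i. f m \<noteq> c"
  defines "k \<equiv> GREATEST k. k<i \<and> c < f (k-1) \<and> f k < c"
  shows "1 \<le> k \<and> k<i \<and> c < f (k-1) \<and> f k < c \<and> (\<forall>m. k \<le> m \<longrightarrow> m < i \<longrightarrow> f m < c)"
proof -
  let ?P = "\<lambda>k. k<i \<and> c < f (k-1) \<and> f k < c"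
  have run: "d < i \<Longrightarrow> (\<forall>k'. i-1-d < k' \<and> k' < i \<longrightarrow> \<not> ?P k') \<Longrightarrow> f (i-1-d) < c" for d
  proof (induction d)
    case 0 then show ?case using a by simp
  next
    case (Suc d)
    define m where "m = i - 1 - Suc d"
    have e: "i - 1 - d = Suc m" using Suc.prems(1) unfolding m_def by simp
    have all: "\<forall>k'. i-1-d < k' \<and> k' < i \<longrightarrow> \<not> ?P k'"
    proof (intro allI impI)
      fix k' assume "i-1-d < k' \<and> k' < i"
      then have "i-1-Suc d < k' \<and> k' < i" by linarith
      then show "\<not> ?P k'" using Suc.prems(2) by blast
    qed
    have "d < i" using Suc.prems(1) by simp
    then have "f (i-1-d) < c" using Suc.IH all by blast
    then have fm: "f (Suc m) < c" using e by simp
    have lt: "m < Suc m" "Suc m < i" using e Suc.prems(1) by linarith+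
    have "i-1-Suc d < Suc m" using lt unfolding m_def by simp
    then have "\<not> ?P (Suc m)" using Suc.prems(2) lt(2) by blast
    then have "\<not> c < f m" using fm lt(2) by simp
    then have "f m \<le> c" by (simp add: not_less)
    moreover have "f m \<noteq> c" using ne lt by simp
    ultimately show ?case unfolding m_def by simp
  qed
  have ex: "\<exists>k. ?P k"
  proof (rule ccontr)
    assume "\<not> ?thesis"
    then have "f (i-1-(i-1)) < c" using run[of "i-1"] i by auto
    then show False using f0 by simp
  qed
  have bnd: "\<forall>y. ?P y \<longrightarrow> y \<le> i" by auto
  have P: "?P k" unfolding k_def by (rule GreatestI_ex_nat[of ?P i, OF ex]) simp
  have k1: "1 \<le> k" using P f0 by (cases k) auto
  have "\<forall>m. k \<le> m \<longrightarrow> m < i \<longrightarrow> f m < c"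
  proof (intro allI impI)
    fix m assume m: "k \<le> m" "m < i"
    have "f (i-1-(i-1-m)) < c"
    proof (rule run)
      show "i - 1 - m < i" using m by simp
      show "\<forall>k'. i - 1 - (i - 1 - m) < k' \<and> k' < i \<longrightarrow> \<not> ?P k'"
      proof (intro allI impI)
        fix k' assume h: "i - 1 - (i - 1 - m) < k' \<and> k' < i"
        show "\<not> ?P k'"
        proof
          assume "?P k'"
          then have "k' \<le> k" unfolding k_def by (rule Greatest_le_nat[of ?P k' i]) simp
          then show False using h m by simp
        qed
      qed
    qed
    moreover have "i-1-(i-1-m) = m" using m by simp
    ultimately show "f m < c" by simp
  qed
  then show ?thesis using P k1 by blast
qed



lemma wx_in: "1 \<le> m \<Longrightarrow> m \<le> length w \<Longrightarrow> wx w m = enat (w!(m-1))" by (simp add: wx_def)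
lemma wx_out: "length w < m \<Longrightarrow> wx w m = \<infinity>" by (simp add: wx_def)
lemma wx_0: "wx w 0 = \<infinity>" by (simp add: wx_def)

lemma wx_fin: "wx w m = enat x \<Longrightarrow> 1 \<le> m \<and> m \<le> length w \<and> w!(m-1) = x"
  by (simp add: wx_def split: if_splits)

lemma wx_eq: "distinct w \<Longrightarrow> 1 \<le> i \<Longrightarrow> i \<le> length w \<Longrightarrow> w!(i-1) = j \<Longrightarrow> wx w m = enat j \<Longrightarrow> m = i"
proof -
  assume a: "distinct w" "1 \<le> i" "i \<le> length w" "w!(i-1) = j" "wx w m = enat j"
  from wx_fin[OF a(5)] have m: "1 \<le> m" "m \<le> length w" "w!(m-1) = j" by auto
  have "m - 1 = i - 1" using nth_eq_iff_index_eq[OF a(1), of "m-1" "i-1"] m a by simp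
  then show "m = i" using m a by simp
qed

lemma pos_basic: assumes "j \<in> set w"
  shows "1 \<le> pos w j \<and> pos w j \<le> length w \<and> w!(pos w j - 1) = j"
proof -
  from assms obtain t where t: "t < length w" "w!t = j" by (auto simp: in_set_conv_nth)
  have "\<exists>i. 1 \<le> i \<and> i \<le> length w \<and> w ! (i - 1) = j" using t by (intro exI[of _ "Suc t"]) simp
  then show ?thesis unfolding pos_def by (rule LeastI_ex)
qed

lemma free_in_set: "j \<in> free_letters w \<Longrightarrow> j \<in> set w"
  by (auto simp: free_letters_def upslope_def downslope_def)

lemma pos_free: assumes d: "distinct w" and f: "j \<in> free_letters w"
  shows "1 \<le> pos w j \<and> pos w j \<le> length w \<and> w!(pos w j - 1) = j \<and> (upslope w (pos w j) \<or> downslope w (pos w j))"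
proof -
  from f obtain i0 where i0: "j = w!(i0-1)" "upslope w i0 \<or> downslope w i0"
    unfolding free_letters_def by blast
  have r: "1 \<le> i0" "i0 \<le> length w" using i0(2) by (auto simp: upslope_def downslope_def)
  have p: "1 \<le> pos w j \<and> pos w j \<le> length w \<and> w!(pos w j - 1) = j"
    using pos_basic[OF free_in_set[OF f]] .
  have "wx w i0 = enat j" using r i0 by (simp add: wx_in)
  then have "i0 = pos w j" using wx_eq[OF d] p by blast
  then show ?thesis using p i0 by simp
qed

lemma decomp: "1 \<le> i \<Longrightarrow> i \<le> length w \<Longrightarrow> take (i-1) w @ [w!(i-1)] @ drop i w = w"
  using id_take_nth_drop[of "i-1" w] by simp

lemma finish1:
  assumes "distinct (L@[j]@B@R)" "\<forall>b\<in>set B. b<j" "L\<noteq>[] \<longrightarrow> j < last L" "R\<noteq>[] \<longrightarrow> j < hd R"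
    "w = L@[j]@B@R" "h = L@B@[j]@R"
  shows "mset h = mset w \<and> (contains231 h \<longleftrightarrow> contains231 w)"
  using key[OF assms(1-4)] assms(5,6) by (simp add: ac_simps)

lemma finish2:
  assumes "distinct (L@B@[j]@R)" "\<forall>b\<in>set B. b<j" "L\<noteq>[] \<longrightarrow> j < last L" "R\<noteq>[] \<longrightarrow> j < hd R"
    "w = L@B@[j]@R" "h = L@[j]@B@R"
  shows "mset h = mset w \<and> (contains231 h \<longleftrightarrow> contains231 w)"
proof -
  have "distinct (L@[j]@B@R)" using assms(1) by auto
  then show ?thesis using key[OF _ assms(2-4)] assms(5,6) by (simp add: ac_simps)
qed

lemma hop_main:
  assumes d: "distinct w" and f: "j \<in> free_letters w"
  shows "mset (hop w j) = mset w \<and> (contains231 (hop w j) \<longleftrightarrow> contains231 w)"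
proof -
  define i where "i = pos w j"
  define n where "n = length w"
  have p: "1 \<le> i" "i \<le> n" "w!(i-1) = j" "upslope w i \<or> downslope w i"
    using pos_free[OF d f] unfolding i_def n_def by auto
  have wi: "wx w i = enat j" using p by (simp add: wx_in n_def)
  have neq: "\<And>m. m \<noteq> i \<Longrightarrow> wx w m \<noteq> enat j" using wx_eq[OF d p(1) _ p(3)] p(2) n_def by blast
  show ?thesis
  proof (cases "downslope w i")
    case True
    define k where "k = (LEAST k. i < k \<and> wx w k < enat j \<and> enat j < wx w (k + 1))"
    have a: "wx w (Suc i) < enat j" using True wi by (simp add: downslope_def)
    have lr: "i<k \<and> wx w k < enat j \<and> enat j < wx w (k+1) \<and> (\<forall>m. i<m \<longrightarrow> m \<le> k \<longrightarrow> wx w m < enat j)"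
      unfolding k_def
      by (rule least_run[of "wx w" i "enat j" n]) (use a neq in \<open>auto simp: wx_out n_def\<close>)
    have kn: "k \<le> n" using lr wx_out[of w k] n_def by (cases "n < k") auto
    have hop: "hop w j = take (i-1) w @ take (k-i) (drop i w) @ [j] @ drop k w"
      unfolding hop_def i_def[symmetric] k_def using True by (simp add: Let_def)
    have ww: "w = take (i-1) w @ [j] @ take (k-i) (drop i w) @ drop k w"
    proof -
      have "take (k-i) (drop i w) @ drop k w = drop i w"
      proof -
        have "drop k w = drop (k-i) (drop i w)" using lr by simp
        then show ?thesis by (metis append_take_drop_id)
      qed
      then show ?thesis using decomp[of i w] p n_def by simp
    qed
    have B: "\<forall>b\<in>set (take (k-i) (drop i w)). b < j"
    proof
      fix b assume "b \<in> set (take (k-i) (drop i w))"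
      then obtain t where t: "t < k - i" "b = w!(i+t)" using kn n_def
        by (auto simp: in_set_conv_nth)
      have "wx w (i+t+1) < enat j" using lr t by auto
      moreover have "wx w (i+t+1) = enat b" using t kn n_def by (simp add: wx_in)
      ultimately show "b < j" by simp
    qed
    have L: "take (i-1) w \<noteq> [] \<longrightarrow> j < last (take (i-1) w)"
    proof
      assume ne: "take (i-1) w \<noteq> []"
      then have i2: "2 \<le> i" using p by (cases "i = 1") auto
      have "last (take (i-1) w) = w!(i-2)" using ne p i2 n_def
        by (simp add: last_conv_nth numeral_2_eq_2)
      moreover have "wx w (i-1) = enat (w!(i-2))" using i2 p n_def by (simp add: wx_in numeral_2_eq_2)
      moreover have "wx w i < wx w (i-1)" using True by (simp add: downslope_def)
      ultimately show "j < last (take (i-1) w)" using wi by simp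
    qed
    have R: "drop k w \<noteq> [] \<longrightarrow> j < hd (drop k w)"
    proof
      assume ne: "drop k w \<noteq> []"
      then have kl: "k < n" using n_def by simp
      have "hd (drop k w) = w!k" using kl n_def by (simp add: hd_drop_conv_nth)
      moreover have "wx w (k+1) = enat (w!k)" using kl n_def by (simp add: wx_in)
      ultimately show "j < hd (drop k w)" using lr by simp
    qed
    have dd: "distinct (take (i-1) w @ [j] @ take (k-i) (drop i w) @ drop k w)" using d ww by simp
    show ?thesis by (rule finish1[OF dd B L R ww hop])
  next
    case False
    then have up: "upslope w i" using p by simp
    define k where "k = (GREATEST k. k < i \<and> wx w (k - 1) > enat j \<and> enat j > wx w k)"
    have a: "wx w (i-1) < enat j" using up wi by (simp add: upslope_def)
    have gr: "1 \<le> k \<and> k<i \<and> enat j < wx w (k-1) \<and> wx w k < enat j \<and> (\<forall>m. k \<le> m \<longrightarrow> m < i \<longrightarrow> wx w m < enat j)"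
      unfolding k_def
      by (rule greatest_run[of "wx w" i "enat j"]) (use a neq p in \<open>auto simp: wx_0\<close>)
    have hop: "hop w j = take (k-1) w @ [j] @ take (i-k) (drop (k-1) w) @ drop i w"
      unfolding hop_def i_def[symmetric] k_def using False by (simp add: Let_def)
    have ww: "w = take (k-1) w @ take (i-k) (drop (k-1) w) @ [j] @ drop i w"
    proof -
      have "take (k-1) w @ take (i-k) (drop (k-1) w) = take (i-1) w"
      proof -
        have "i - 1 = (k-1) + (i-k)" using gr by simp
        then show ?thesis using take_add[of "k-1" "i-k" w] by simp
      qed
      then show ?thesis using decomp[of i w] p n_def by (metis append_assoc)
    qed
    have B: "\<forall>b\<in>set (take (i-k) (drop (k-1) w)). b < j"
    proof
      fix b assume "b \<in> set (take (i-k) (drop (k-1) w))"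
      then obtain t where t: "t < i - k" "b = w!(k-1+t)" using gr p n_def
        by (auto simp: in_set_conv_nth)
      have "wx w (k+t) < enat j" using gr t by auto
      moreover have "wx w (k+t) = enat b" using t gr p n_def by (simp add: wx_in)
      ultimately show "b < j" by simp
    qed
    have L: "take (k-1) w \<noteq> [] \<longrightarrow> j < last (take (k-1) w)"
    proof
      assume ne: "take (k-1) w \<noteq> []"
      then have k2: "2 \<le> k" using gr by (cases "k = 1") auto
      have ki: "k < i" using gr by blast
      have "k - 1 \<le> length w" using p(2) ki n_def by linarith
      then have "min (length w) (k-1) = k - 1" by (simp add: min_def)
      then have "last (take (k-1) w) = w!(k-2)" using ne p gr k2 n_def
        by (simp add: last_conv_nth numeral_2_eq_2)
      moreover have "wx w (k-1) = enat (w!(k-1-1))"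
        using k2 \<open>k - 1 \<le> length w\<close> by (intro wx_in) auto
      moreover have "k - 1 - 1 = k - 2" by simp
      ultimately show "j < last (take (k-1) w)" using gr by simp
    qed
    have R: "drop i w \<noteq> [] \<longrightarrow> j < hd (drop i w)"
    proof
      assume ne: "drop i w \<noteq> []"
      then have kl: "i < n" using n_def by simp
      have "hd (drop i w) = w!i" using kl n_def by (simp add: hd_drop_conv_nth)
      moreover have "wx w (i+1) = enat (w!i)" using kl n_def by (simp add: wx_in)
      moreover have "wx w i < wx w (i+1)" using up by (simp add: upslope_def)
      ultimately show "j < hd (drop i w)" using wi by simp
    qed
    have dd: "distinct (take (k-1) w @ take (i-k) (drop (k-1) w) @ [j] @ drop i w)" using d ww by simp
    show ?thesis by (rule finish2[OF dd B L R ww hop])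
  qed
qed



lemma hop_general: assumes "j \<in> set y" shows "mset (hop y j) = mset y \<or> \<not> distinct (hop y j)"
proof -
  define i where "i = pos y j"
  have p: "1 \<le> i" "i \<le> length y" "y!(i-1) = j" using pos_basic[OF assms] unfolding i_def by auto
  have dec: "take (i-1) y @ [j] @ drop i y = y" using decomp[of i y] p by simp
  have jin: "\<And>t. t \<le> i - 1 \<Longrightarrow> j \<in> set (drop t y)"
  proof -
    fix t assume t: "t \<le> i - 1"
    have "(drop t y) ! (i-1-t) = j" using t p by simp
    moreover have "i-1-t < length (drop t y)" using t p by simp
    ultimately show "j \<in> set (drop t y)" by (metis nth_mem)
  qed
  have jin2: "\<And>t. i - 1 < t \<Longrightarrow> j \<in> set (take t y)"
  proof -
    fix t assume t: "i - 1 < t"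
    have "(take t y) ! (i-1) = j" using t p by simp
    moreover have "i-1 < length (take t y)" using t p by simp
    ultimately show "j \<in> set (take t y)" by (metis nth_mem)
  qed
  show ?thesis
  proof (cases "downslope y i")
    case True
    define k where "k = (LEAST k. i < k \<and> wx y k < enat j \<and> enat j < wx y (k + 1))"
    have hop: "hop y j = take (i-1) y @ take (k-i) (drop i y) @ [j] @ drop k y"
      unfolding hop_def i_def[symmetric] k_def using True by (simp add: Let_def)
    show ?thesis
    proof (cases "i \<le> k")
      case True
      have "drop k y = drop (k-i) (drop i y)" using True by simp
      then have "take (k-i) (drop i y) @ drop k y = drop i y" by (metis append_take_drop_id)
      then have "mset (hop y j) = mset (take (i-1) y @ [j] @ drop i y)" unfolding hop
        by (metis mset_append union_commute union_lcomm append_assoc)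
      then show ?thesis using arg_cong[OF dec, of mset] by simp
    next
      case False
      then have "j \<in> set (drop k y)" using jin by simp
      then show ?thesis unfolding hop by simp
    qed
  next
    case False
    define k where "k = (GREATEST k. k < i \<and> wx y (k - 1) > enat j \<and> enat j > wx y k)"
    have hop: "hop y j = take (k-1) y @ [j] @ take (i-k) (drop (k-1) y) @ drop i y"
      unfolding hop_def i_def[symmetric] k_def using False by (simp add: Let_def)
    consider "k = 0" | "i < k" | "1 \<le> k \<and> k \<le> i" by linarith
    then show ?thesis
    proof cases
      case 1
      then have "j \<in> set (take (i-k) (drop (k-1) y))" using jin2[of i] p by simp
      then show ?thesis unfolding hop by simp
    next
      case 2
      then have "j \<in> set (take (k-1) y)" using jin2[of "k-1"] p by simp
      then show ?thesis unfolding hop by simp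
    next
      case 3
      have "i - 1 = (k-1) + (i-k)" using 3 by simp
      then have "take (k-1) y @ take (i-k) (drop (k-1) y) = take (i-1) y" using take_add[of "k-1" "i-k" y] by simp
      then have "mset (hop y j) = mset (take (i-1) y @ [j] @ drop i y)" unfolding hop
        by (metis mset_append union_commute union_lcomm append_assoc)
      then show ?thesis using arg_cong[OF dec, of mset] by simp
    qed
  qed
qed

lemma perm_mset: "is_perm n x \<Longrightarrow> mset y = mset x \<Longrightarrow> is_perm n y"
  unfolding is_perm_def
  by (metis mset_eq_imp_distinct_iff mset_eq_setD size_mset)

theorem mainTheorem15:
  fixes n :: nat and w :: "nat list"
  assumes "w \<in> S231 n"
  shows "hop_class w \<subseteq> S231 n"
proof
  fix v assume "v \<in> hop_class w"
  then have "hop_equiv w v" by (simp add: hop_class_def)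
  then show "v \<in> S231 n" unfolding hop_equiv_def
  proof (induction rule: rtranclp_induct)
    case base then show ?case using assms by simp
  next
    case (step y z)
    have yp: "is_perm n y" "\<not> contains231 y" using step.IH by (auto simp: S231_def avoids231_def)
    from step.hyps(2) show ?case
    proof
      assume "hop_step y z"
      then obtain j where j: "j \<in> free_letters y" "z = hop y j" by (auto simp: hop_step_def)
      have "mset z = mset y \<and> (contains231 z \<longleftrightarrow> contains231 y)"
        using hop_main[OF _ j(1)] yp j(2) by (simp add: is_perm_def)
      then show ?thesis using perm_mset[OF yp(1)] yp(2) by (auto simp: S231_def avoids231_def)
    next
      assume "hop_step z y"
      then obtain j where j: "j \<in> free_letters z" "y = hop z j" by (auto simp: hop_step_def)
      have "distinct y" using yp by (simp add: is_perm_def)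
      then have m: "mset y = mset z" using hop_general[OF free_in_set[OF j(1)]] j(2) by auto
      then have zp: "is_perm n z" using perm_mset[OF yp(1)] by simp
      then have "contains231 y \<longleftrightarrow> contains231 z"
        using hop_main[OF _ j(1)] j(2) by (simp add: is_perm_def)
      then show ?thesis using zp yp(2) by (auto simp: S231_def avoids231_def)
    qed
  qed
qed


end
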